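(* Let $a_1,\ldots,a_n$ be relatively prime positive integers, let $\mathcal{S}=\langle a_1,\ldots,a_n\rangle$, and let $e$ be a positive integer with $\gcd(e,a_1)=1$. Put $\mathcal{S}^e=\langle a_1,ea_2,\ldots,ea_n\rangle$. Then $\mathrm{type}(\mathcal{S})=\mathrm{type}(\mathcal{S}^e)$.
   Context: For positive integers $b_1,\ldots,b_t$ with $\gcd(b_1,\ldots,b_t)=1$, $\langle b_1,\ldots,b_t\rangle$ denotes the numerical semigroup of all non-negative integer linear combinations of $b_1,\ldots,b_t$. For a numerical semigroup $\mathcal{S}$, a pseudo-Frobenius number is an integer $x\notin\mathcal{S}$ such that $x+s\in\mathcal{S}$ for all $s\in\mathcal{S}$ with $s>0$ (equivalently, for all nonzero $s \in \mathcal{S}$); the type $\mathrm{type}(\mathcal{S})$ is the number of pseudo-Frobenius numbers of $\mathcal{S}$. *)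

theory Defs
  imports Main
begin

definition gen_semigroup :: "nat list \<Rightarrow> int set" where
  "gen_semigroup bs = {x. \<exists>c :: nat \<Rightarrow> nat. x = int (\<Sum>i<length bs. c i * bs ! i)}"

definition pseudo_frobenius :: "int set \<Rightarrow> int set" where
  "pseudo_frobenius S = {x. x \<notin> S \<and> (\<forall>s\<in>S. s > 0 \<longrightarrow> x + s \<in> S)}"

definition sg_type :: "int set \<Rightarrow> nat" where
  "sg_type S = card (pseudo_frobenius S)"

end

theory Submission imports Defs begin

lemma gs_cons: "gen_semigroup (x # xs) = {int k * int x + t | k t. t \<in> gen_semigroup xs}"
proof (intro set_eqI iffI)
  fix z assume "z \<in> gen_semigroup (x # xs)"
  then obtain c where c: "z = int (\<Sum>i<length (x#xs). c i * (x#xs) ! i)"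
    unfolding gen_semigroup_def by auto
  have "(\<Sum>i<length (x#xs). c i * (x#xs) ! i) = c 0 * x + (\<Sum>i<length xs. c (Suc i) * xs ! i)"
    by (simp only: length_Cons sum.lessThan_Suc_shift) simp
  then have "z = int (c 0) * int x + int (\<Sum>i<length xs. c (Suc i) * xs ! i)" using c by simp
  moreover have "int (\<Sum>i<length xs. c (Suc i) * xs ! i) \<in> gen_semigroup xs"
    unfolding gen_semigroup_def by (intro CollectI exI[of _ "\<lambda>i. c (Suc i)"]) (rule refl)
  ultimately show "z \<in> {int k * int x + t | k t. t \<in> gen_semigroup xs}" by blast
next
  fix z assume "z \<in> {int k * int x + t | k t. t \<in> gen_semigroup xs}"
  then obtain k c where z: "z = int k * int x + int (\<Sum>i<length xs. c i * xs ! i)"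
    unfolding gen_semigroup_def by auto
  define d where "d = (\<lambda>i. if i = 0 then k else c (i - 1))"
  have "(\<Sum>i<length (x#xs). d i * (x#xs) ! i) = k * x + (\<Sum>i<length xs. c i * xs ! i)"
    by (simp only: length_Cons sum.lessThan_Suc_shift) (simp add: d_def)
  then have "z = int (\<Sum>i<length (x#xs). d i * (x#xs) ! i)" using z by simp
  then show "z \<in> gen_semigroup (x # xs)" unfolding gen_semigroup_def by blast
qed

lemma gs_map: "gen_semigroup (map (\<lambda>x. e * x) xs) = {int e * t | t. t \<in> gen_semigroup xs}"
proof -
  have "\<And>c. (\<Sum>i<length xs. c i * (e * xs ! i)) = e * (\<Sum>i<length xs. c i * xs ! i)"
    by (simp add: sum_distrib_left mult.left_commute)
  then show ?thesis unfolding gen_semigroup_def by auto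
qed

lemma gs_zero: "0 \<in> gen_semigroup xs"
  unfolding gen_semigroup_def by (rule CollectI, rule exI[of _ "\<lambda>_. 0"]) simp

lemma gs_add: "x \<in> gen_semigroup xs \<Longrightarrow> y \<in> gen_semigroup xs \<Longrightarrow> x + y \<in> gen_semigroup xs"
proof -
  assume "x \<in> gen_semigroup xs" "y \<in> gen_semigroup xs"
  then obtain c d where "x = int (\<Sum>i<length xs. c i * xs ! i)" "y = int (\<Sum>i<length xs. d i * xs ! i)"
    unfolding gen_semigroup_def by auto
  then have "x + y = int (\<Sum>i<length xs. (\<lambda>i. c i + d i) i * xs ! i)"
    by (simp add: sum.distrib add_mult_distrib)
  then show ?thesis unfolding gen_semigroup_def by (intro CollectI exI[of _ "\<lambda>i. c i + d i"])
qed

lemma main_abs: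
  fixes A E :: int and T :: "int set"
  assumes A: "A > 0" and E: "E > 0" and cop: "coprime E A"
    and T0: "0 \<in> T" and Tadd: "\<And>x y. x \<in> T \<Longrightarrow> y \<in> T \<Longrightarrow> x + y \<in> T"
    and S_def: "S = {int k * A + t | k t. t \<in> T}"
    and Se_def: "Se = {int k * A + E * t | k t. t \<in> T}"
  shows "card (pseudo_frobenius S) = card (pseudo_frobenius Se)"
proof -
  define psi where "psi = (\<lambda>z. E * z + (E - 1) * A)"
  have Sadd: "x + y \<in> S" if "x \<in> S" "y \<in> S" for x y
  proof -
    from that obtain k1 t1 k2 t2 where "x = int k1 * A + t1" "t1 \<in> T" "y = int k2 * A + t2" "t2 \<in> T"
      unfolding S_def by auto
    then have "x + y = int (k1 + k2) * A + (t1 + t2)" "t1 + t2 \<in> T"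
      by (auto simp: algebra_simps Tadd)
    then show ?thesis unfolding S_def by blast
  qed
  have Seadd: "x + y \<in> Se" if "x \<in> Se" "y \<in> Se" for x y
  proof -
    from that obtain k1 t1 k2 t2 where "x = int k1 * A + E * t1" "t1 \<in> T" "y = int k2 * A + E * t2" "t2 \<in> T"
      unfolding Se_def by auto
    then have "x + y = int (k1 + k2) * A + E * (t1 + t2)" "t1 + t2 \<in> T"
      by (auto simp: algebra_simps Tadd)
    then show ?thesis unfolding Se_def by blast
  qed
  have AS: "A \<in> S" unfolding S_def using T0 by (intro CollectI exI[of _ 1] exI[of _ 0]) simp
  have ASe: "int k * A \<in> Se" for k unfolding Se_def using T0 by (intro CollectI exI[of _ k] exI[of _ 0]) simp
  have TS: "t \<in> S" if "t \<in> T" for t unfolding S_def using that by (intro CollectI exI[of _ 0] exI[of _ t]) simp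
  have ETSe: "E * t \<in> Se" if "t \<in> T" for t unfolding Se_def using that by (intro CollectI exI[of _ 0] exI[of _ t]) simp
  have ESe: "E * z \<in> Se" if "z \<in> S" for z
  proof -
    from that obtain k t where "z = int k * A + t" "t \<in> T" unfolding S_def by auto
    then have "E * z = int (nat E * k) * A + E * t" using E by (simp add: algebra_simps)
    then show ?thesis unfolding Se_def using \<open>t \<in> T\<close> by blast
  qed
  have psiS: "psi z \<in> Se \<longleftrightarrow> z \<in> S" for z
  proof
    assume "z \<in> S"
    have "psi z = E * z + int (nat (E - 1)) * A" unfolding psi_def using E by simp
    then show "psi z \<in> Se" using Seadd[OF ESe[OF \<open>z \<in> S\<close>] ASe[of "nat (E - 1)"]] by simp
  next
    assume "psi z \<in> Se"
    then obtain k t where kt: "E * z + (E - 1) * A = int k * A + E * t" "t \<in> T"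
      unfolding Se_def psi_def by auto
    then have eq: "E * (z + A - t) = (int k + 1) * A" by (simp add: algebra_simps)
    then have "E dvd (int k + 1) * A" by (metis dvd_triv_left)
    then have "E dvd int k + 1" using cop by (simp add: coprime_dvd_mult_left_iff)
    then obtain m where m: "int k + 1 = E * m" by blast
    have "m > 0" using m E by (smt (verit) mult_nonneg_nonpos of_nat_0_le_iff)
    have "E * (z + A - t) = E * (m * A)" using eq m by (metis mult.assoc mult.commute)
    then have "z + A - t = m * A" using E by simp
    then have "z = (m - 1) * A + t" by (simp add: algebra_simps)
    then have "z = int (nat (m - 1)) * A + t" using \<open>m > 0\<close> by simp
    then show "z \<in> S" unfolding S_def using kt(2) by blast
  qed
  have inj: "inj_on psi (pseudo_frobenius S)" unfolding psi_def inj_on_def using E by auto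
  have img: "psi ` pseudo_frobenius S = pseudo_frobenius Se"
  proof (intro set_eqI iffI)
    fix y assume "y \<in> psi ` pseudo_frobenius S"
    then obtain x where x: "x \<notin> S" "\<And>s. s \<in> S \<Longrightarrow> s > 0 \<Longrightarrow> x + s \<in> S" and y: "y = psi x"
      unfolding pseudo_frobenius_def by auto
    have "y \<notin> Se" using x(1) psiS y by simp
    moreover have "y + s \<in> Se" if "s \<in> Se" "s > 0" for s
    proof -
      from that obtain k t where s: "s = int k * A + E * t" "t \<in> T" unfolding Se_def by auto
      show ?thesis
      proof (cases k)
        case 0
        then have "t > 0" using s that(2) E by (simp add: zero_less_mult_iff)
        then have "x + t \<in> S" using x(2) TS s(2) by blast
        then have "psi (x + t) \<in> Se" using psiS by blast
        moreover have "psi (x + t) = y + s" using y s 0 unfolding psi_def by (simp add: algebra_simps)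
        ultimately show ?thesis by simp
      next
        case (Suc j)
        have "x + A \<in> S" using x(2) AS A by blast
        then have "x + A + t \<in> S" using Sadd TS s(2) by blast
        then have "E * (x + A + t) + int j * A \<in> Se" using ESe Seadd ASe by blast
        moreover have "E * (x + A + t) + int j * A = y + s" using y s Suc unfolding psi_def
          by (simp add: algebra_simps)
        ultimately show ?thesis by simp
      qed
    qed
    ultimately show "y \<in> pseudo_frobenius Se" unfolding pseudo_frobenius_def by auto
  next
    fix y assume "y \<in> pseudo_frobenius Se"
    then have y: "y \<notin> Se" "\<And>s. s \<in> Se \<Longrightarrow> s > 0 \<Longrightarrow> y + s \<in> Se"
      unfolding pseudo_frobenius_def by auto
    have "y + A \<in> Se" using y(2)[OF ASe[of 1]] A by simp
    then obtain k t where kt: "y + A = int k * A + E * t" "t \<in> T" unfolding Se_def by auto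
    have "k = 0"
    proof (rule ccontr)
      assume "k \<noteq> 0"
      then have "y = int (k - 1) * A + E * t" using kt(1) by (simp add: of_nat_diff algebra_simps)
      then have "y \<in> Se" unfolding Se_def using kt(2) by blast
      then show False using y(1) by simp
    qed
    define x where "x = t - A"
    have yx: "y = psi x" unfolding psi_def x_def using kt(1) \<open>k = 0\<close> by (simp add: algebra_simps)
    have "x \<notin> S" using y(1) psiS yx by simp
    moreover have "x + s \<in> S" if "s \<in> S" "s > 0" for s
    proof -
      have "E * s \<in> Se" "E * s > 0" using ESe that E by auto
      then have "y + E * s \<in> Se" using y(2) by blast
      moreover have "y + E * s = psi (x + s)" using yx unfolding psi_def by (simp add: algebra_simps)
      ultimately show ?thesis using psiS by simp
    qed
    ultimately have "x \<in> pseudo_frobenius S" unfolding pseudo_frobenius_def by auto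
    then show "y \<in> psi ` pseudo_frobenius S" using yx by blast
  qed
  show ?thesis using card_image[OF inj] img by simp
qed

theorem proposition1:
  fixes a :: "nat list" and e :: nat
  assumes "length a \<ge> 1"
    and "\<forall>i<length a. a ! i > 0"
    and "Gcd (set a) = 1"
    and "e > 0"
    and "gcd e (a ! 0) = 1"
  shows "sg_type (gen_semigroup a)
       = sg_type (gen_semigroup (a ! 0 # map (\<lambda>x. e * x) (tl a)))"
proof -
  have ne: "a \<noteq> []" using assms(1) by auto
  then have aeq: "a = a ! 0 # tl a" by (cases a) auto
  have pos: "a ! 0 > 0" using assms(2) ne by auto
  have cop: "coprime (int e) (int (a ! 0))" using assms(5) by (simp add: coprime_iff_gcd_eq_1)
  have S: "gen_semigroup a = {int k * int (a ! 0) + t | k t. t \<in> gen_semigroup (tl a)}"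
    by (subst aeq, subst gs_cons) simp
  have Se: "gen_semigroup (a ! 0 # map (\<lambda>x. e * x) (tl a))
      = {int k * int (a ! 0) + int e * t | k t. t \<in> gen_semigroup (tl a)}"
    by (subst gs_cons, subst gs_map) blast
  show ?thesis unfolding sg_type_def
    by (rule main_abs[OF _ _ cop gs_zero gs_add S Se]) (use pos assms(4) in auto)
qed

end
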